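(* Let $\mathbf{k}$ be a field, $p\ge3$ and $q\ge1$ integers, $S=\mathbf{k}[e_1,\dots,e_{qp}]$, and $L=\bigcap_{j=1}^{(q-1)p+1}\langle e_j,\dots,e_{j+p-2}\rangle$. Let $A'$ be the $(2q-1)\times((q-1)+(p-1)q)$ matrix with entries $A'_{i,j}=e_{pi+j-qp}$, where $e_0=1$ and $e_k=0$ for $k<0$ or $k>qp$. Let $B$ be any $(2q-1)\times(2q-1)$ submatrix of $A'$ (columns kept in their original order). Then (i) if the product $\prod_{i=1}^{2q-1}B_{i,2q-i}$ of the antidiagonal entries of $B$ is $0$, then $\det(B)=0$; and (ii) the product of the antidiagonal entries of $B$ lies in $L$. *)

theory Defs
  imports "HOL-Library.Poly_Mapping" "Jordan_Normal_Form.Determinant"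
begin

text \<open>Multivariate polynomials over a field: monomials are finitely supported
exponent vectors, polynomials are finitely supported coefficient maps.\<close>
type_synonym 'a mpoly_rep = "(nat \<Rightarrow>\<^sub>0 nat) \<Rightarrow>\<^sub>0 'a"

definition var :: "nat \<Rightarrow> 'a::field mpoly_rep" where
  "var k = Poly_Mapping.single (Poly_Mapping.single k 1) 1"

definition polyring :: "nat \<Rightarrow> 'a::field mpoly_rep set" where
  "polyring n = {f. \<forall>m \<in> Poly_Mapping.keys f. Poly_Mapping.keys m \<subseteq> {1..n}}"

definition var_ideal :: "nat \<Rightarrow> nat set \<Rightarrow> 'a::field mpoly_rep set" where
  "var_ideal n G = {f. \<exists>c. (\<forall>j\<in>G. c j \<in> polyring n) \<and> f = (\<Sum>j\<in>G. c j * var j)}"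

definition L_ideal :: "nat \<Rightarrow> nat \<Rightarrow> 'a::field mpoly_rep set" where
  "L_ideal p q = (\<Inter>j\<in>{1..(q-1)*p+1}. var_ideal (q*p) {j..j+p-2})"

definition evar :: "nat \<Rightarrow> nat \<Rightarrow> int \<Rightarrow> 'a::field mpoly_rep" where
  "evar p q k = (if k = 0 then 1 else if k < 0 \<or> k > int (q*p) then 0 else var (nat k))"

text \<open>The matrix A' with 1-based indices: A'_{i,j} = e_{pi+j-qp},
  1 \<le> i \<le> 2q-1, 1 \<le> j \<le> (q-1)+(p-1)q.\<close>
definition Aprime_entry :: "nat \<Rightarrow> nat \<Rightarrow> nat \<Rightarrow> nat \<Rightarrow> 'a::field mpoly_rep" where
  "Aprime_entry p q i j = evar p q (int p * int i + int j - int q * int p)"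

definition Aprime_ncols :: "nat \<Rightarrow> nat \<Rightarrow> nat" where
  "Aprime_ncols p q = (q - 1) + (p - 1) * q"

text \<open>The (2q-1)x(2q-1) submatrix of A' with columns c 1 < ... < c (2q-1) (1-based),
  as a Jordan_Normal_Form matrix (0-based internally): B_{i,k} = A'_{i, c k}.\<close>
definition subB :: "nat \<Rightarrow> nat \<Rightarrow> (nat \<Rightarrow> nat) \<Rightarrow> 'a::field mpoly_rep mat" where
  "subB p q c = mat (2*q-1) (2*q-1) (\<lambda>(i,k). Aprime_entry p q (i+1) (c (k+1)))"

definition antidiag_prod :: "nat \<Rightarrow> nat \<Rightarrow> (nat \<Rightarrow> nat) \<Rightarrow> 'a::field mpoly_rep" where
  "antidiag_prod p q c = (\<Prod>i\<in>{1..2*q-1}. Aprime_entry p q i (c (2*q - i)))"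

end

theory Submission
  imports Defs
begin

lemma var_nonzero: "var k \<noteq> (0::'a::field mpoly_rep)"
  unfolding var_def by (metis keys_single empty_iff insertI1 keys_zero one_neq_zero)

lemma polyring_zero: "0 \<in> polyring n" by (simp add: polyring_def)
lemma polyring_one: "1 \<in> polyring n" by (simp add: polyring_def)
lemma polyring_var: "1 \<le> k \<Longrightarrow> k \<le> n \<Longrightarrow> (var k :: 'a::field mpoly_rep) \<in> polyring n"
  by (simp add: polyring_def var_def)
lemma polyring_mult:
  fixes f g :: "'a::field mpoly_rep"
  assumes "f \<in> polyring n" "g \<in> polyring n" shows "f * g \<in> polyring n"
proof (unfold polyring_def, intro CollectI ballI)
  fix m :: "nat \<Rightarrow>\<^sub>0 nat" assume "m \<in> Poly_Mapping.keys (f * g)"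
  then have "m \<in> {a + b |a b. a \<in> Poly_Mapping.keys f \<and> b \<in> Poly_Mapping.keys g}" using keys_mult[of f g] by blast
  then obtain a b where "m = a + b" "a \<in> Poly_Mapping.keys f" "b \<in> Poly_Mapping.keys g" by blast
  then show "Poly_Mapping.keys m \<subseteq> {1..n}" using assms keys_add[of a b] unfolding polyring_def by blast
qed
lemma polyring_prod:
  "(\<And>i. i \<in> A \<Longrightarrow> f i \<in> polyring n) \<Longrightarrow> prod f A \<in> polyring n"
proof (induction A rule: infinite_finite_induct)
  case (infinite A) then show ?case by (simp add: polyring_one)
next
  case empty then show ?case by (simp add: polyring_one)
next
  case (insert x F) then show ?case by (simp add: polyring_mult)
qed

lemma evar_polyring: "(evar p q k :: 'a::field mpoly_rep) \<in> polyring (q*p)"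
  proof -
  have "nat k \<le> q * p" if "\<not> int q * int p < k" using that by (simp add: nat_le_iff not_less)
  then show ?thesis unfolding evar_def by (auto simp: polyring_zero polyring_one intro!: polyring_var)
qed

lemma evar_zero_iff: "((evar p q k :: 'a::field mpoly_rep) = 0) \<longleftrightarrow> (k < 0 \<or> k > int (q*p))"
  proof -
  have "0 \<le> int q * int p" by simp
  then show ?thesis unfolding evar_def using var_nonzero by (auto simp: mult_less_0_iff)
qed

lemma evar_var: "1 \<le> k \<Longrightarrow> k \<le> int (q*p) \<Longrightarrow> evar p q k = var (nat k)"
  unfolding evar_def by auto

lemma det_zero_block:
  fixes A :: "'a::comm_ring_1 mat"
  assumes A: "A \<in> carrier_mat n n" and R: "R \<subseteq> {0..<n}" and C: "C \<subseteq> {0..<n}"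
    and card: "card R + card C > n"
    and z: "\<And>r s. r \<in> R \<Longrightarrow> s \<in> C \<Longrightarrow> A $$ (r,s) = 0"
  shows "det A = 0"
proof -
  have "(\<Prod>i=0..<n. A $$ (i, \<pi> i)) = 0" if pi: "\<pi> permutes {0..<n}" for \<pi>
  proof -
    have "\<exists>r\<in>R. \<pi> r \<in> C"
    proof (rule ccontr)
      assume no: "\<not> ?thesis"
      have "\<pi> ` R \<subseteq> {0..<n} - C" using no R permutes_in_image[OF pi] by auto
      then have "card (\<pi> ` R) \<le> card ({0..<n} - C)" by (intro card_mono) auto
      moreover have "card (\<pi> ` R) = card R"
        using permutes_inj[OF pi] by (simp add: card_image inj_on_subset)
      moreover have "card ({0..<n} - C) = n - card C"
        using C by (simp add: card_Diff_subset finite_subset)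
      moreover have "card C \<le> n" using C by (metis card_atLeastLessThan card_mono diff_zero finite_atLeastLessThan)
      ultimately show False using card by linarith
    qed
    then obtain r where "r \<in> R" "\<pi> r \<in> C" by blast
    then show ?thesis using R z by (intro prod_zero) auto
  qed
  then show ?thesis unfolding det_def'[OF A] by simp
qed

theorem proposition5p3:
  fixes p q :: nat and c :: "nat \<Rightarrow> nat"
  assumes "p \<ge> 3" and "q \<ge> 1"
    and "strict_mono_on {1..2*q-1} c"
    and "c ` {1..2*q-1} \<subseteq> {1..Aprime_ncols p q}"
  shows "(antidiag_prod p q c = (0 :: 'a::field mpoly_rep) \<longrightarrow> det (subB p q c :: 'a mpoly_rep mat) = 0)
     \<and> (antidiag_prod p q c :: 'a mpoly_rep) \<in> L_ideal p q"
proof -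
  note p3 = assms(1) and q1 = assms(2) and mono = assms(3) and crng = assms(4)
  define n where "n = 2*q - 1"
  define K where "K i = int p * int i + int (c (2*q - i)) - int q * int p" for i
  have prodK: "antidiag_prod p q c = (\<Prod>i\<in>{1..n}. (evar p q (K i) :: 'a mpoly_rep))"
    unfolding antidiag_prod_def Aprime_entry_def K_def n_def by simp
  have ncols: "int (Aprime_ncols p q) = int p * int q - 1"
  proof -
    have "Aprime_ncols p q + 1 = p * q" unfolding Aprime_ncols_def
      using p3 q1 by (cases p; cases q) (auto simp: algebra_simps)
    then show ?thesis by (metis add_diff_cancel_right' of_nat_add of_nat_mult of_nat_1)
  qed
  have cb: "1 \<le> c s \<and> int (c s) \<le> int p * int q - 1" if "s \<in> {1..n}" for s
    using crng that ncols unfolding n_def by force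
  have mle: "c a \<le> c b" if "a \<in> {1..n}" "b \<in> {1..n}" "a \<le> b" for a b
    using strict_mono_on_leD[OF mono] that unfolding n_def by blast
  have mlt: "c a < c b" if "a \<in> {1..n}" "b \<in> {1..n}" "a < b" for a b
    using strict_mono_onD[OF mono] that unfolding n_def by blast
  have refl_idx: "2*q - i \<in> {1..n}" if "i \<in> {1..n}" for i
    using that unfolding n_def by auto
  have step: "K (i+1) \<le> K i + int p - 1" if "1 \<le> i" "i + 1 \<le> n" for i
  proof -
    have "c (2*q - (i+1)) < c (2*q - i)"
      using that by (intro mlt) (auto simp: n_def)
    then show ?thesis unfolding K_def by (simp add: algebra_simps)
  qed
  have K1: "K 1 \<le> int p - 1"
    using cb[of "2*q-1"] q1 unfolding K_def n_def by (simp add: algebra_simps)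
  have Kn: "K n \<ge> int p * int q - int p + 1"
  proof -
    have "2*q - n = 1" "int n = 2 * int q - 1" using q1 unfolding n_def by auto
    moreover have "1 \<le> c 1" using cb[of 1] q1 unfolding n_def by auto
    moreover have "int p * int n = 2 * int q * int p - int p"
    proof -
      have "int p * int n = int p * (2 * int q - 1)" using \<open>int n = 2 * int q - 1\<close> by simp
      also have "\<dots> = 2 * int q * int p - int p" by (simp add: algebra_simps)
      finally show ?thesis .
    qed
    ultimately show ?thesis unfolding K_def by simp
  qed
  have n1: "1 \<le> n" using q1 unfolding n_def by auto
  have part2: "antidiag_prod p q c \<in> (L_ideal p q :: 'a mpoly_rep set)"
    unfolding L_ideal_def
  proof (rule INT_I)
    fix j assume "j \<in> {1..(q - 1) * p + 1}"
    then have j: "1 \<le> j" "j \<le> (q - 1) * p + 1" by auto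
    have jint: "int j \<le> int p * int q - int p + 1"
    proof -
      have "int j \<le> int ((q - 1) * p + 1)" using j(2) by (simp only: of_nat_le_iff)
      also have "\<dots> = (int q - 1) * int p + 1" using q1 by (simp add: of_nat_diff)
      also have "\<dots> = int p * int q - int p + 1" by (simp add: algebra_simps)
      finally show ?thesis .
    qed
    define P where "P i = (1 \<le> i \<and> int j \<le> K i)" for i
    have Pn: "P n" using Kn jint n1 unfolding P_def by auto
    define i0 where "i0 = (LEAST i. P i)"
    have Pi0: "P i0" unfolding i0_def using Pn by (rule LeastI)
    have i0n: "i0 \<le> n" unfolding i0_def using Pn by (rule Least_le)
    have Kup: "K i0 \<le> int j + int p - 2"
    proof (cases "i0 = 1")
      case True then show ?thesis using K1 j by simp
    next
      case False
      then have "1 \<le> i0 - 1" using Pi0 unfolding P_def by auto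
      moreover have "\<not> P (i0 - 1)" using not_less_Least[of "i0 - 1" P] Pi0 False unfolding i0_def P_def
        by (metis diff_less less_one not_le zero_less_iff_neq_zero)
      ultimately have "K (i0 - 1) < int j" unfolding P_def by auto
      moreover have "K (i0 - 1 + 1) \<le> K (i0 - 1) + int p - 1"
        using \<open>1 \<le> i0 - 1\<close> i0n by (intro step) auto
      moreover have "i0 - 1 + 1 = i0" using False Pi0 unfolding P_def by auto
      ultimately show ?thesis by simp
    qed
    define m where "m = nat (K i0)"
    have Klo: "int j \<le> K i0" and i01: "1 \<le> i0" using Pi0 unfolding P_def by auto
    have mG: "m \<in> {j..j+p-2}" unfolding m_def using Klo Kup p3 by auto
    have Kqp: "K i0 \<le> int (q*p)" using Kup jint p3 by (simp add: algebra_simps)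
    have ev: "evar p q (K i0) = (var m :: 'a mpoly_rep)"
      unfolding m_def using Klo j Kqp by (intro evar_var) auto
    define rest where "rest = (\<Prod>i\<in>{1..n}-{i0}. (evar p q (K i) :: 'a mpoly_rep))"
    have restP: "rest \<in> polyring (q*p)" unfolding rest_def by (intro polyring_prod evar_polyring)
    have "antidiag_prod p q c = var m * rest"
      unfolding prodK rest_def using i0n i01 ev by (subst prod.remove[of _ i0]) auto
    also have "\<dots> = (\<Sum>l\<in>{j..j+p-2}. (if l = m then rest else 0) * var l)"
    proof -
      have "(\<Sum>l\<in>{j..j+p-2}. (if l = m then rest else 0) * (var l :: 'a mpoly_rep))
          = (\<Sum>l\<in>{j..j+p-2}. if l = m then rest * var l else 0)"
        by (rule sum.cong) auto
      also have "\<dots> = rest * var m" using mG by (subst sum.delta) auto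
      finally show ?thesis by (simp add: mult.commute)
    qed
    finally show "antidiag_prod p q c \<in> (var_ideal (q*p) {j..j+p-2} :: 'a mpoly_rep set)"
      unfolding var_ideal_def using restP polyring_zero by (intro CollectI exI[of _ "\<lambda>l. if l = m then rest else 0"]) auto
  qed
  have part1: "det (subB p q c :: 'a mpoly_rep mat) = 0" if z: "antidiag_prod p q c = (0 :: 'a mpoly_rep)"
  proof -
    obtain i where i: "i \<in> {1..n}" and Ki: "K i < 0 \<or> K i > int (q*p)"
      using z unfolding prodK by (auto simp: prod_zero_iff evar_zero_iff)
    have carr: "(subB p q c :: 'a mpoly_rep mat) \<in> carrier_mat n n" unfolding subB_def n_def by simp
    have ent: "(subB p q c :: 'a mpoly_rep mat) $$ (r,s) = evar p q (int p * int (r+1) + int (c (s+1)) - int q * int p)"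
      if "r < n" "s < n" for r s
      using that unfolding subB_def n_def Aprime_entry_def by simp
    have pm: "int p * int a \<le> int p * int b" if "a \<le> b" for a b using that by (simp add: mult_left_mono)
    from Ki show ?thesis
    proof
      assume neg: "K i < 0"
      show ?thesis
      proof (rule det_zero_block[OF carr, of "{0..<i}" "{0..<2*q-i}"])
        show "{0..<i} \<subseteq> {0..<n}" "{0..<2*q-i} \<subseteq> {0..<n}" using i unfolding n_def by auto
        show "n < card {0..<i} + card {0..<2*q-i}" using i unfolding n_def by auto
        fix r s assume rs: "r \<in> {0..<i}" "s \<in> {0..<2*q-i}"
        have "c (s+1) \<le> c (2*q-i)" using rs i by (intro mle) (auto simp: n_def)
        moreover have "int p * int (r+1) \<le> int p * int i" using rs by (intro pm) auto
        ultimately have "int p * int (r+1) + int (c (s+1)) - int q * int p < 0" using neg unfolding K_def by linarith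
        then show "(subB p q c :: 'a mpoly_rep mat) $$ (r,s) = 0"
          using rs i by (subst ent) (auto simp: n_def evar_zero_iff)
      qed
    next
      assume pos: "K i > int (q*p)"
      show ?thesis
      proof (rule det_zero_block[OF carr, of "{i-1..<n}" "{2*q-i-1..<n}"])
        show "{i-1..<n} \<subseteq> {0..<n}" "{2*q-i-1..<n} \<subseteq> {0..<n}" by auto
        show "n < card {i-1..<n} + card {2*q-i-1..<n}" using i unfolding n_def by auto
        fix r s assume rs: "r \<in> {i-1..<n}" "s \<in> {2*q-i-1..<n}"
        have "c (2*q-i) \<le> c (s+1)" using rs i by (intro mle) (auto simp: n_def)
        moreover have "int p * int i \<le> int p * int (r+1)" using rs by (intro pm) auto
        ultimately have "int p * int (r+1) + int (c (s+1)) - int q * int p > int (q*p)" using pos unfolding K_def by linarith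
        then show "(subB p q c :: 'a mpoly_rep mat) $$ (r,s) = 0"
          using rs i by (subst ent) (auto simp: n_def evar_zero_iff)
      qed
    qed
  qed
  show ?thesis using part1 part2 by blast
qed

end
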